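(* Let $G=(V,D,B)$ be a mixed graph. For $\Lambda\in\mathbb{R}^D_{\mathrm{reg}}$ and $\Omega\in\mathit{PD}(B)$, let $\Sigma=\phi_G(\Lambda,\Omega)$. Then the rank of the Jacobian $J_G(\Lambda,\Omega)$ equals $\mathrm{rank}(\mathbf{J}(\Lambda,\Sigma))+|B|+|V|$.
   Context: A mixed graph with finite vertex set $V$ is a triple $G=(V,D,B)$ with $D$ a set of ordered pairs $(i,j)$, $i\ne j$ (directed edges $i\to j$) and $B$ a set of unordered pairs $\{i,j\}$, $i\ne j$ (bidirected edges). $\mathbb{R}^D_{\mathrm{reg}}$ is the set of real $V\times V$ matrices $\Lambda=(\lambda_{ij})$ with $\lambda_{ij}=0$ for $(i,j)\notin D$ and $I-\Lambda$ invertible; $\mathit{PD}(B)$ is the set of positive definite symmetric $V\times V$ matrices $\Omega$ with $\omega_{ij}=0$ for $i\neq j$, $\{i,j\}\notin B$. The covariance parametrization is $\phi_G:\mathbb{R}^D_{\mathrm{reg}}\times\mathit{PD}(B)\to\mathit{PD}$, $(\Lambda,\Omega)\mapsto (I-\Lambda)^{-T}\Omega(I-\Lambda)^{-1}$, and $J_G(\Lambda,\Omega)$ is its Jacobian with respect to the free parameters: the entries $\lambda_{kl}$, $(k,l)\in D$, the diagonal entries $\omega_{ii}$, $i\in V$, and the entries $\omega_{ij}$, $\{i,j\}\in B$ (with output the entries $\Sigma_{ij}$ indexed by unordered pairs/diagonal). Let $g(\Lambda,\Sigma)=(I-\Lambda)^T\Sigma(I-\Lambda)$ for $\Lambda\in\mathbb{R}^D_{\mathrm{reg}}$,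 $\Sigma$ positive definite, and let $N=\{\{i,j\}: i,j\in V, i\ne j, \{i,j\}\notin B\}$. Then $\mathbf{J}(\Lambda,\Sigma)$ is the $N\times D$ matrix with entries $\mathbf{J}(\Lambda,\Sigma)_{\{i,j\},(k,l)}=\partial g_{ij}(\Lambda,\Sigma)/\partial\lambda_{kl}$, for $\{i,j\}\in N$, $(k,l)\in D$. *)

theory Defs
  imports "HOL-Analysis.Analysis" "HOL-Library.Function_Algebras"
begin

text \<open>Vertex set V = UNIV of a finite type 'v. Directed edges D: ordered pairs;
  bidirected edges B: unordered pairs, represented as two-element sets {i,j}.\<close>

definition mixed_graph :: "('v \<times> 'v) set \<Rightarrow> 'v set set \<Rightarrow> bool" where
  "mixed_graph D B \<longleftrightarrow> (\<forall>(i,j)\<in>D. i \<noteq> j) \<and> (\<forall>e\<in>B. \<exists>i j. i \<noteq> j \<and> e = {i,j})"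

definition reg_D :: "('v::finite \<times> 'v) set \<Rightarrow> real^'v^'v \<Rightarrow> bool" where
  "reg_D D L \<longleftrightarrow> (\<forall>i j. (i,j) \<notin> D \<longrightarrow> L$i$j = 0) \<and> invertible (mat 1 - L)"

definition PD_B :: "'v::finite set set \<Rightarrow> real^'v^'v \<Rightarrow> bool" where
  "PD_B B W \<longleftrightarrow> transpose W = W \<and> (\<forall>x. x \<noteq> 0 \<longrightarrow> x \<bullet> (W *v x) > 0)
     \<and> (\<forall>i j. i \<noteq> j \<and> {i,j} \<notin> B \<longrightarrow> W$i$j = 0)"

definition phi :: "real^'v::finite^'v \<Rightarrow> real^'v^'v \<Rightarrow> real^'v^'v" where
  "phi L W = transpose (matrix_inv (mat 1 - L)) ** W ** matrix_inv (mat 1 - L)"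

definition gmap :: "real^'v::finite^'v \<Rightarrow> real^'v^'v \<Rightarrow> real^'v^'v" where
  "gmap L S = transpose (mat 1 - L) ** S ** (mat 1 - L)"

definition sym_entry :: "real^'v^'v \<Rightarrow> 'v set \<Rightarrow> real" where
  "sym_entry M e = (case (SOME (i,j). e = {i,j}) of (i,j) \<Rightarrow> M$i$j)"

text \<open>free parameters: lambda_kl for (k,l) in D (Inl), omega_ii (Inr {i}), omega_ij for {i,j} in B (Inr {i,j})\<close>
definition params :: "('v \<times> 'v) set \<Rightarrow> 'v set set \<Rightarrow> (('v \<times> 'v) + 'v set) set" where
  "params D B = Inl ` D \<union> Inr ` ({{i} | i. True} \<union> B)"

definition Lam_of :: "('v::finite \<times> 'v) set \<Rightarrow> (('v \<times> 'v) \<Rightarrow> real) \<Rightarrow> real^'v^'v" where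
  "Lam_of D \<theta> = (\<chi> i j. if (i,j) \<in> D then \<theta> (i,j) else 0)"

definition Om_of :: "'v::finite set set \<Rightarrow> ('v set \<Rightarrow> real) \<Rightarrow> real^'v^'v" where
  "Om_of B \<theta> = (\<chi> i j. if i = j \<or> {i,j} \<in> B then \<theta> {i,j} else 0)"

definition phi_G :: "('v::finite \<times> 'v) set \<Rightarrow> 'v set set \<Rightarrow> (('v \<times> 'v) + 'v set \<Rightarrow> real) \<Rightarrow> real^'v^'v" where
  "phi_G D B \<theta> = phi (Lam_of D (\<lambda>p. \<theta> (Inl p))) (Om_of B (\<lambda>e. \<theta> (Inr e)))"

definition theta_of :: "real^'v::finite^'v \<Rightarrow> real^'v^'v \<Rightarrow> ('v \<times> 'v) + 'v set \<Rightarrow> real" where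
  "theta_of L W p = (case p of Inl (k,l) \<Rightarrow> L$k$l | Inr e \<Rightarrow> sym_entry W e)"

definition partial :: "(('p \<Rightarrow> real) \<Rightarrow> real) \<Rightarrow> ('p \<Rightarrow> real) \<Rightarrow> 'p \<Rightarrow> real" where
  "partial F \<theta> p = deriv (\<lambda>t. F (\<theta>(p := t))) (\<theta> p)"

text \<open>Jacobian J_G(Lambda,Omega): rows = entries Sigma_{ij} (unordered pairs / diagonal), columns = free parameters\<close>
definition J_G :: "('v::finite \<times> 'v) set \<Rightarrow> 'v set set \<Rightarrow> real^'v^'v \<Rightarrow> real^'v^'v
                   \<Rightarrow> 'v set \<Rightarrow> ('v \<times> 'v) + 'v set \<Rightarrow> real" where
  "J_G D B L W e p = partial (\<lambda>\<theta>. sym_entry (phi_G D B \<theta>) e) (theta_of L W) p"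

definition sigma_idx :: "'v set set" where
  "sigma_idx = {{i,j} | i j. True}"

definition N_idx :: "'v set set \<Rightarrow> 'v set set" where
  "N_idx B = {{i,j} | i j. i \<noteq> j \<and> {i,j} \<notin> B}"

definition bJ :: "('v::finite \<times> 'v) set \<Rightarrow> real^'v^'v \<Rightarrow> real^'v^'v \<Rightarrow> 'v set \<Rightarrow> ('v \<times> 'v) \<Rightarrow> real" where
  "bJ D L S e q = partial (\<lambda>\<theta>. sym_entry (gmap (Lam_of D \<theta>) S) e) (\<lambda>(k,l). L$k$l) q"

definition mat_rank :: "'r set \<Rightarrow> 'c set \<Rightarrow> ('r \<Rightarrow> 'c \<Rightarrow> real) \<Rightarrow> nat" where
  "mat_rank R C M = vector_space.dim (\<lambda>a f x. a * f x) ((\<lambda>c r. if r \<in> R then M r c else 0) ` C)"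

end

theory Submission
  imports Defs
begin


definition fsc :: "real \<Rightarrow> ('a \<Rightarrow> real) \<Rightarrow> ('a \<Rightarrow> real)" where
  "fsc = (\<lambda>a f x. a * f x)"

definition ind :: "'a \<Rightarrow> 'a \<Rightarrow> real" where
  "ind e = (\<lambda>x. if x = e then 1 else 0)"

lemma sum_fun_apply: "(\<Sum>i\<in>A. (g i :: 'a \<Rightarrow> real)) x = (\<Sum>i\<in>A. g i x)"
  by (induction A rule: infinite_finite_induct) auto

lemma vs_fsc: "vector_space (fsc :: real \<Rightarrow> ('a \<Rightarrow> real) \<Rightarrow> _)"
  by unfold_locales (auto simp: fsc_def fun_eq_iff algebra_simps)

interpretation FV: vector_space "fsc :: real \<Rightarrow> ('a \<Rightarrow> real) \<Rightarrow> _"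
  by (rule vs_fsc)

lemma FV_fin: "finite_dimensional_vector_space (fsc :: real \<Rightarrow> ('a::finite \<Rightarrow> real) \<Rightarrow> _) (range ind)"
proof -
  have sp: "FV.span (range ind) = (UNIV :: ('a \<Rightarrow> real) set)"
  proof safe
    fix f :: "'a \<Rightarrow> real"
    have h: "f e * (if x = e then 1 else 0) = (if e = x then f x else 0)" for e x
      by auto
    have "f = (\<Sum>e\<in>UNIV. fsc (f e) (ind e))"
      by (auto simp: fun_eq_iff sum_fun_apply fsc_def ind_def h)
    also have "\<dots> \<in> FV.span (range ind)"
      by (intro FV.span_sum FV.span_scale FV.span_base) auto
    finally show "f \<in> FV.span (range ind)" .
  qed auto
  have ind_inj: "inj ind" by (auto simp: inj_def ind_def fun_eq_iff split: if_splits)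
  have indep: "FV.independent (range (ind :: 'a \<Rightarrow> _))"
  proof -
    have "\<forall>v\<in>range ind. c v = 0" if h: "(\<Sum>v\<in>range ind. fsc (c v) v) = 0" for c :: "('a \<Rightarrow> real) \<Rightarrow> real"
    proof
      fix v assume "v \<in> range (ind :: 'a \<Rightarrow> _)"
      then obtain e where v: "v = ind e" by auto
      have "(\<Sum>v\<in>range ind. fsc (c v) v) e = 0" using h by simp
      then have "(\<Sum>x\<in>UNIV. c (ind x) * ind x e) = 0"
        by (simp add: sum_fun_apply sum.reindex[OF ind_inj] fsc_def)
      moreover have "c (ind x) * ind x e = (if x = e then c (ind e) else 0)" for x
        by (auto simp: ind_def)
      ultimately show "c v = 0" by (simp add: v)
    qed
    then show ?thesis by (subst FV.dependent_finite) auto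
  qed
  show ?thesis by unfold_locales (auto simp: sp indep)
qed

interpretation FVF: finite_dimensional_vector_space "fsc :: real \<Rightarrow> ('a::finite \<Rightarrow> real) \<Rightarrow> _" "range ind"
  by (rule FV_fin)

interpretation FVP: finite_dimensional_vector_space_pair_1 "fsc :: real \<Rightarrow> ('a::finite \<Rightarrow> real) \<Rightarrow> _" "range ind"
   "fsc :: real \<Rightarrow> ('b \<Rightarrow> real) \<Rightarrow> _"
  by unfold_locales

lemma linI:
  fixes f :: "('a \<Rightarrow> real) \<Rightarrow> ('b \<Rightarrow> real)"
  assumes "\<And>x y. f (x + y) = f x + f y" "\<And>a x. f (fsc a x) = fsc a (f x)"
  shows "Vector_Spaces.linear fsc fsc f"
  using assms vs_fsc[where 'a='a] vs_fsc[where 'a='b]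
  unfolding linear_iff_module_hom module_hom_def module_hom_axioms_def module_iff_vector_space
  by auto

lemma dim_inv_eq:
  fixes f :: "('a::finite \<Rightarrow> real) \<Rightarrow> ('b::finite \<Rightarrow> real)"
  assumes "Vector_Spaces.linear fsc fsc f" "Vector_Spaces.linear fsc fsc g" "\<And>x. x \<in> S \<Longrightarrow> g (f x) = x"
  shows "FV.dim (f ` S) = FV.dim S"
proof -
  have "g ` f ` S = S" using assms(3) by force
  then have "FV.dim S \<le> FV.dim (f ` S)"
    using FVP.dim_image_le[OF assms(2), of "f ` S"] by simp
  moreover have "FV.dim (f ` S) \<le> FV.dim S"
    using FVP.dim_image_le[OF assms(1), of S] by simp
  ultimately show ?thesis by simp
qed

lemma main_lin:
  fixes P N :: "'a::finite set" and K :: "('a \<Rightarrow> real) set"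
  assumes disj: "P \<inter> N = {}" and supp: "\<And>k x. k \<in> K \<Longrightarrow> x \<notin> P \<Longrightarrow> x \<notin> N \<Longrightarrow> k x = 0"
  shows "FV.dim (ind ` P \<union> K) = card P + FV.dim ((\<lambda>f x. if x \<in> N then f x else 0) ` K)"
proof -
  define \<pi> where "\<pi> = (\<lambda>(f::'a \<Rightarrow> real) x. if x \<in> N then f x else 0)"
  have dec: "k = \<pi> k + (\<Sum>e\<in>P. fsc (k e) (ind e))" if "k \<in> K" for k
  proof
    fix x
    have h: "fsc (k e) (ind e) x = (if e = x then k x else 0)" for e
      by (auto simp: fsc_def ind_def)
    show "k x = (\<pi> k + (\<Sum>e\<in>P. fsc (k e) (ind e))) x"
      using supp[OF that, of x] disj by (auto simp: \<pi>_def sum_fun_apply h)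
  qed
  have sp1: "FV.span (ind ` P \<union> K) = FV.span (ind ` P \<union> \<pi> ` K)"
  proof (subst FV.span_eq, safe)
    fix k assume k: "k \<in> K"
    have "\<pi> k + (\<Sum>e\<in>P. fsc (k e) (ind e)) \<in> FV.span (ind ` P \<union> \<pi> ` K)"
      by (intro FV.span_add FV.span_sum FV.span_scale FV.span_base) (auto simp: k)
    then show "k \<in> FV.span (ind ` P \<union> \<pi> ` K)" using dec[OF k] by simp
  next
    fix k assume k: "k \<in> K"
    have "k - (\<Sum>e\<in>P. fsc (k e) (ind e)) \<in> FV.span (ind ` P \<union> K)"
      by (intro FV.span_diff FV.span_sum FV.span_scale FV.span_base) (auto simp: k)
    then show "\<pi> k \<in> FV.span (ind ` P \<union> K)" using dec[OF k]
      by (metis add_diff_cancel)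
  qed (auto intro: FV.span_base)
  obtain C where C: "C \<subseteq> \<pi> ` K" "FV.independent C" "\<pi> ` K \<subseteq> FV.span C" "card C = FV.dim (\<pi> ` K)"
    using FV.basis_exists[of "\<pi> ` K"] by blast
  have finC: "finite C" using C(2) FVF.finiteI_independent by blast
  have Cz: "v x = 0" if "v \<in> C" "x \<notin> N" for v x
    using that C(1) by (auto simp: \<pi>_def)
  have ind_inj: "inj ind" by (auto simp: inj_def ind_def fun_eq_iff split: if_splits)
  have dsj: "ind ` P \<inter> C = {}"
  proof -
    have "ind e \<notin> C" if "e \<in> P" for e
      using Cz[of "ind e" e] that disj by (auto simp: ind_def)
    then show ?thesis by auto
  qed
  have indep: "FV.independent (ind ` P \<union> C)"
  proof -
    have "\<forall>v\<in>ind ` P \<union> C. u v = 0" if h: "(\<Sum>v\<in>ind ` P \<union> C. fsc (u v) v) = 0" for u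
    proof -
      define s1 where "s1 = (\<Sum>v\<in>ind ` P. fsc (u v) v)"
      define s2 where "s2 = (\<Sum>v\<in>C. fsc (u v) v)"
      have "s1 + s2 = 0" using h unfolding s1_def s2_def
        by (subst (asm) sum.union_disjoint) (auto simp: finC dsj)
      have s1e: "s1 x = (if x \<in> P then u (ind x) else 0)" for x
      proof -
        have "s1 x = (\<Sum>e\<in>P. u (ind e) * ind e x)"
          unfolding s1_def by (simp add: sum_fun_apply sum.reindex[OF inj_on_subset[OF ind_inj]] fsc_def)
        also have "\<dots> = (\<Sum>e\<in>P. if e = x then u (ind x) else 0)"
          by (intro sum.cong) (auto simp: ind_def)
        finally show ?thesis by simp
      qed
      have s2e: "s2 x = 0" if "x \<notin> N" for x
        unfolding s2_def sum_fun_apply using Cz that by (auto simp: fsc_def intro!: sum.neutral)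
      have "s2 = 0"
      proof
        fix x
        show "s2 x = 0 x"
        proof (cases "x \<in> N")
          case True
          then have "x \<notin> P" using disj by auto
          then show ?thesis using fun_cong[OF \<open>s1 + s2 = 0\<close>, of x] s1e[of x] by simp
        qed (simp add: s2e)
      qed
      then have C0: "\<forall>v\<in>C. u v = 0"
        using C(2) finC unfolding s2_def by (auto simp: FV.dependent_finite)
      have "s1 = 0" using \<open>s1 + s2 = 0\<close> \<open>s2 = 0\<close> by simp
      have "\<forall>v\<in>ind ` P. u v = 0"
      proof
        fix v assume "v \<in> ind ` P"
        then obtain e where "e \<in> P" "v = ind e" by auto
        then show "u v = 0" using s1e[of e] \<open>s1 = 0\<close> by simp
      qed
      with C0 show ?thesis by blast
    qed
    then show ?thesis using finC by (subst FV.dependent_finite) auto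
  qed
  have sp2: "FV.span (ind ` P \<union> \<pi> ` K) = FV.span (ind ` P \<union> C)"
  proof -
    have "FV.span C \<subseteq> FV.span (ind ` P \<union> C)" by (rule FV.span_mono) auto
    then show ?thesis
      using C(1,3) by (subst FV.span_eq) (auto intro: FV.span_base)
  qed
  have "FV.dim (ind ` P \<union> K) = FV.dim (ind ` P \<union> C)"
    by (metis FV.dim_span sp1 sp2)
  also have "\<dots> = card (ind ` P \<union> C)"
    by (rule FV.dim_eq_card_independent[OF indep])
  also have "\<dots> = card P + card C"
    using dsj finC by (simp add: card_Un_disjoint card_image inj_on_subset[OF ind_inj])
  finally show ?thesis using C(4) by (simp add: \<pi>_def)
qed



definition Eq :: "'v::finite \<times> 'v \<Rightarrow> real^'v^'v" where
  "Eq q = (\<chi> i j. if (i,j) = q then 1 else 0)"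

lemma mm_radd: "((A::real^'n^'m) + B) ** C = A ** C + B ** C"
  by (simp add: matrix_matrix_mult_def vec_eq_iff sum.distrib algebra_simps)
lemma mm_ldiff: "(A::real^'n^'m) ** (B - C) = A ** B - A ** C"
  by (simp add: matrix_matrix_mult_def vec_eq_iff sum_subtractf algebra_simps)
lemma mm_rdiff: "((A::real^'n^'m) - B) ** C = A ** C - B ** C"
  by (simp add: matrix_matrix_mult_def vec_eq_iff sum_subtractf algebra_simps)
lemma mm_lscale: "(k *\<^sub>R (A::real^'n^'m)) ** B = k *\<^sub>R (A ** B)"
  by (simp add: scalar_matrix_assoc)
lemma mm_rscale: "(A::real^'n^'m) ** (k *\<^sub>R B) = k *\<^sub>R (A ** B)"
  by (simp add: matrix_scalar_ac scalar_matrix_assoc)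
lemma tr_add: "transpose ((A::real^'n^'m) + B) = transpose A + transpose B"
  by (simp add: transpose_def vec_eq_iff)
lemma tr_diff: "transpose ((A::real^'n^'m) - B) = transpose A - transpose B"
  by (simp add: transpose_def vec_eq_iff)

lemma EXE: "Eq (k,l) ** M ** Eq (k,l) = (M$l$k) *\<^sub>R Eq (k,l)"
proof -
  have h1: "(Eq (k,l) ** M)$i$b = (if i = k then M$l$b else 0)" for i b
  proof -
    have "(Eq (k,l) ** M)$i$b = (\<Sum>a\<in>UNIV. (if (i,a) = (k,l) then 1 else 0) * M$a$b)"
      by (simp add: matrix_matrix_mult_def Eq_def)
    also have "\<dots> = (\<Sum>a\<in>UNIV. if a = l then (if i = k then M$a$b else 0) else 0)"
      by (intro sum.cong) auto
    finally show ?thesis by simp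
  qed
  have h2: "(N ** Eq (k,l))$i$j = (if j = l then N$i$k else 0)" for i j and N :: "real^'a^'a"
  proof -
    have "(N ** Eq (k,l))$i$j = (\<Sum>a\<in>UNIV. N$i$a * (if (a,j) = (k,l) then 1 else 0))"
      by (simp add: matrix_matrix_mult_def Eq_def)
    also have "\<dots> = (\<Sum>a\<in>UNIV. if a = k then (if j = l then N$i$a else 0) else 0)"
      by (intro sum.cong) auto
    finally show ?thesis by simp
  qed
  have "(Eq (k,l) ** M ** Eq (k,l))$i$j = (M$l$k *\<^sub>R Eq (k,l))$i$j" for i j
  proof -
    have "(Eq (k,l) ** M ** Eq (k,l))$i$j = (if j = l then (if i = k then M$l$k else 0) else 0)"
      by (simp only: h2 h1)
    then show ?thesis by (simp add: Eq_def)
  qed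
  then show ?thesis by (simp add: vec_eq_iff)
qed

lemma minv:
  fixes A :: "real^'n^'n"
  assumes "invertible A"
  shows "A ** matrix_inv A = mat 1" "matrix_inv A ** A = mat 1"
  using someI_ex[OF assms[unfolded invertible_def]] unfolding matrix_inv_def by auto

lemma minv_unique:
  fixes A B :: "real^'n^'n"
  assumes "A ** B = mat 1"
  shows "matrix_inv A = B"
proof -
  have BA: "B ** A = mat 1" using assms matrix_left_right_inverse by blast
  then have inv: "invertible A" using assms invertible_def by blast
  have "B = B ** (A ** matrix_inv A)" using minv[OF inv] by simp
  also have "\<dots> = matrix_inv A" by (simp add: matrix_mul_assoc BA)
  finally show ?thesis by simp
qed

lemma SM:
  fixes A X :: "real^'n^'n"
  assumes AX: "A ** X = mat 1" and c: "c = X$l$k" and nz: "1 - s * c \<noteq> 0"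
  shows "matrix_inv (A - s *\<^sub>R Eq (k,l)) = X + (s / (1 - s * c)) *\<^sub>R (X ** Eq (k,l) ** X)"
proof (rule minv_unique)
  define E where "E = Eq (k,l)"
  define \<phi> where "\<phi> = s / (1 - s * c)"
  have AP: "A ** (X ** E ** X) = E ** X" by (simp add: matrix_mul_assoc AX)
  have EP: "E ** (X ** E ** X) = c *\<^sub>R (E ** X)"
    by (simp add: matrix_mul_assoc E_def EXE c mm_lscale)
  have "(A - s *\<^sub>R E) ** (X + \<phi> *\<^sub>R (X ** E ** X))
      = A ** X + \<phi> *\<^sub>R (A ** (X ** E ** X)) - s *\<^sub>R (E ** X) - (s * \<phi>) *\<^sub>R (E ** (X ** E ** X))"
    by (simp add: mm_rdiff matrix_add_ldistrib mm_lscale mm_rscale algebra_simps)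
  also have "\<dots> = mat 1 + (\<phi> - s - s * \<phi> * c) *\<^sub>R (E ** X)"
    by (simp add: AP EP AX algebra_simps)
  also have "\<phi> - s - s * \<phi> * c = 0" using nz by (simp add: \<phi>_def field_simps)
  finally show "(A - s *\<^sub>R Eq (k,l)) ** (X + (s / (1 - s * c)) *\<^sub>R (X ** Eq (k,l) ** X)) = mat 1"
    by (simp add: E_def \<phi>_def)
qed

lemma quad_expand:
  fixes X P W :: "real^'n^'n"
  shows "transpose (X + f *\<^sub>R P) ** W ** (X + f *\<^sub>R P)
    = transpose X ** W ** X + f *\<^sub>R (transpose P ** W ** X + transpose X ** W ** P)
      + (f * f) *\<^sub>R (transpose P ** W ** P)"
  by (simp add: tr_add transpose_scalar mm_radd matrix_add_ldistrib mm_lscale mm_rscale algebra_simps)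



definition pr :: "'v set \<Rightarrow> 'v \<times> 'v" where
  "pr e = (SOME (i,j). e = {i,j})"

lemma se: "sym_entry M e = M $ fst (pr e) $ snd (pr e)"
  by (simp add: sym_entry_def pr_def split: prod.split)

lemma pr_sigma: assumes "e \<in> sigma_idx" shows "e = {fst (pr e), snd (pr e)}"
proof -
  obtain i j where "e = {i,j}" using assms by (auto simp: sigma_idx_def)
  then have "\<exists>p. (case p of (i,j) \<Rightarrow> e = {i,j})" by auto
  from someI_ex[OF this] show ?thesis unfolding pr_def by (simp split: prod.splits)
qed

lemma sigma_in[simp]: "{i,j} \<in> sigma_idx"
  by (auto simp: sigma_idx_def)

lemma se_sym: assumes "transpose M = M" shows "sym_entry M {i,j} = M$i$j"
proof -
  have "{i,j} = {fst (pr {i,j}), snd (pr {i,j})}" by (rule pr_sigma) simp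
  moreover have "M$a$b = M$b$a" for a b
    using assms by (metis transpose_def vec_lambda_beta)
  ultimately show ?thesis unfolding se by (auto simp: doubleton_eq_iff)
qed

definition mat_of :: "('v::finite set \<Rightarrow> real) \<Rightarrow> real^'v^'v" where
  "mat_of f = (\<chi> i j. f {i,j})"

lemma mat_of_sym: "transpose (mat_of f) = mat_of f"
  by (simp add: mat_of_def transpose_def vec_eq_iff insert_commute)

lemma se_mat_of: assumes "e \<in> sigma_idx" shows "sym_entry (mat_of f) e = f e"
  using pr_sigma[OF assms] by (simp add: se mat_of_def)

lemma mat_of_se: assumes "transpose M = M"
  shows "mat_of (\<lambda>e. if e \<in> sigma_idx then sym_entry M e else 0) = M"
  using se_sym[OF assms] by (simp add: mat_of_def vec_eq_iff)

lemma mat_of_restrict: "mat_of (\<lambda>e. if e \<in> sigma_idx then f e else 0) = mat_of f"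
  by (simp add: mat_of_def)

lemma mat_of_add: "mat_of (f + g) = mat_of f + mat_of g"
  by (simp add: mat_of_def vec_eq_iff)
lemma mat_of_scale: "mat_of (fsc a f) = a *\<^sub>R mat_of f"
  by (simp add: mat_of_def vec_eq_iff fsc_def)

lemma sym_congr: fixes M Y :: "real^'n^'n" shows "transpose M = M \<Longrightarrow> transpose (transpose Y ** M ** Y) = transpose Y ** M ** Y"
proof -
  assume h: "transpose M = M"
  have "transpose (transpose Y ** M ** Y) = transpose Y ** transpose (transpose Y ** M)"
    by (rule matrix_transpose_mul)
  also have "\<dots> = transpose Y ** (transpose M ** Y)"
    by (simp add: matrix_transpose_mul)
  finally show ?thesis by (simp add: h matrix_mul_assoc)
qed



lemma Wsym: "PD_B B W \<Longrightarrow> transpose W = W"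
  by (simp add: PD_B_def)

lemma Lam_base: "reg_D D L \<Longrightarrow> Lam_of D (\<lambda>p. theta_of L W (Inl p)) = L"
  by (auto simp: Lam_of_def theta_of_def reg_D_def vec_eq_iff)

lemma Lam_upd: "reg_D D L \<Longrightarrow> (k,l) \<in> D \<Longrightarrow>
  Lam_of D (\<lambda>p. ((theta_of L W)(Inl (k,l) := t)) (Inl p)) = L + (t - L$k$l) *\<^sub>R Eq (k,l)"
  by (auto simp: Lam_of_def theta_of_def reg_D_def vec_eq_iff Eq_def)

lemma Om_base: "PD_B B W \<Longrightarrow> Om_of B (\<lambda>e. theta_of L W (Inr e)) = W"
  using se_sym[OF Wsym, of B W]
  by (auto simp: Om_of_def theta_of_def PD_B_def vec_eq_iff)

lemma Om_upd:
  assumes pd: "PD_B B W" and e': "e' \<in> {{i} | i. True} \<union> B"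
  shows "Om_of B (\<lambda>e. ((theta_of L W)(Inr e' := t)) (Inr e)) = W + (t - sym_entry W e') *\<^sub>R mat_of (ind e')"
proof -
  have "Om_of B (\<lambda>e. ((theta_of L W)(Inr e' := t)) (Inr e)) $ i $ j
      = (W + (t - sym_entry W e') *\<^sub>R mat_of (ind e')) $ i $ j" for i j
  proof (cases "{i,j} = e'")
    case True
    then have "i = j \<or> {i,j} \<in> B" using e' by (auto simp: doubleton_eq_iff)
    then show ?thesis using True se_sym[OF Wsym[OF pd], of i j]
      by (auto simp: Om_of_def theta_of_def mat_of_def ind_def)
  next
    case False
    then show ?thesis using se_sym[OF Wsym[OF pd], of i j] pd
      by (auto simp: Om_of_def theta_of_def mat_of_def ind_def PD_B_def)
  qed
  then show ?thesis by (simp add: vec_eq_iff)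
qed

lemma phi_G_Inl:
  assumes rg: "reg_D D L" and pd: "PD_B B W" and kl: "(k,l) \<in> D"
  shows "phi_G D B ((theta_of L W)(Inl (k,l) := t)) = phi (L + (t - L$k$l) *\<^sub>R Eq (k,l)) W"
proof -
  have "Om_of B (\<lambda>e. ((theta_of L W)(Inl (k,l) := t)) (Inr e)) = W"
    using Om_base[OF pd, of L] by simp
  then show ?thesis unfolding phi_G_def using Lam_upd[OF rg kl] by simp
qed

lemma phi_G_Inr:
  assumes rg: "reg_D D L" and pd: "PD_B B W" and e': "e' \<in> {{i} | i. True} \<union> B"
  shows "phi_G D B ((theta_of L W)(Inr e' := t)) = phi L (W + (t - sym_entry W e') *\<^sub>R mat_of (ind e'))"
proof -
  have "Lam_of D (\<lambda>p. ((theta_of L W)(Inr e' := t)) (Inl p)) = L"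
    using Lam_base[OF rg, of W] by simp
  then show ?thesis unfolding phi_G_def using Om_upd[OF pd e'] by simp
qed

lemma deriv_phi_quad:
  fixes c m0 m1 m2 t0 :: real
  shows "((\<lambda>t. m0 + ((t - t0) / (1 - (t - t0) * c)) * m1
      + (((t - t0) / (1 - (t - t0) * c)) * ((t - t0) / (1 - (t - t0) * c))) * m2) has_real_derivative m1) (at t0)"
proof -
  have d: "((\<lambda>t. (t - t0) / (1 - (t - t0) * c)) has_real_derivative 1) (at t0)"
    by (auto intro!: derivative_eq_intros)
  show ?thesis
    by (rule derivative_eq_intros d refl | simp)+
qed



lemma JG_Inl:
  assumes rg: "reg_D D L" and pd: "PD_B B W" and kl: "(k,l) \<in> D"
  defines "A \<equiv> mat 1 - L"
  defines "X \<equiv> matrix_inv A"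
  defines "E \<equiv> Eq (k,l)"
  defines "S \<equiv> phi L W"
  shows "J_G D B L W e (Inl (k,l)) =
     sym_entry (transpose X ** (transpose E ** S ** A + transpose A ** S ** E) ** X) e"
proof -
  have inv: "invertible A" using rg by (simp add: reg_D_def A_def)
  have AX: "A ** X = mat 1" and XA: "X ** A = mat 1" using minv[OF inv] by (simp_all add: X_def)
  define t0 where "t0 = L$k$l"
  define c where "c = X$l$k"
  define a where "a = fst (pr e)"
  define b where "b = snd (pr e)"
  define P where "P = X ** E ** X"
  define M1 where "M1 = transpose P ** W ** X + transpose X ** W ** P"
  define M2 where "M2 = transpose P ** W ** P"
  define \<phi> where "\<phi> = (\<lambda>t::real. (t - t0) / (1 - (t - t0) * c))"
  define U where "U = {t::real. 1 - (t - t0) * c \<noteq> 0}"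
  have openU: "open U" unfolding U_def
    by (intro open_Collect_neq continuous_intros)
  have t0U: "t0 \<in> U" by (simp add: U_def)
  have S_eq: "S = transpose X ** W ** X" by (simp add: S_def phi_def X_def A_def)
  have feq: "sym_entry (phi_G D B ((theta_of L W)(Inl (k,l) := t))) e
     = (S + \<phi> t *\<^sub>R M1 + (\<phi> t * \<phi> t) *\<^sub>R M2) $ a $ b" if "t \<in> U" for t
  proof -
    have "mat 1 - (L + (t - t0) *\<^sub>R E) = A - (t - t0) *\<^sub>R E" by (simp add: A_def)
    moreover have "matrix_inv (A - (t - t0) *\<^sub>R E) = X + \<phi> t *\<^sub>R P"
      unfolding E_def P_def \<phi>_def
      by (rule SM[OF AX c_def]) (use that in \<open>simp add: U_def\<close>)
    ultimately have ie: "matrix_inv (mat 1 - (L + (t - t0) *\<^sub>R E)) = X + \<phi> t *\<^sub>R P"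
      by (simp only:)
    show ?thesis
      unfolding phi_G_Inl[OF rg pd kl] se t0_def[symmetric] E_def[symmetric] phi_def ie quad_expand
      by (simp add: S_eq M1_def M2_def a_def b_def)
  qed
  have der: "((\<lambda>t. (S + \<phi> t *\<^sub>R M1 + (\<phi> t * \<phi> t) *\<^sub>R M2) $ a $ b) has_real_derivative M1$a$b) (at t0)"
    unfolding \<phi>_def using deriv_phi_quad[of "S$a$b" t0 c "M1$a$b" "M2$a$b"] by simp
  have der2: "((\<lambda>t. sym_entry (phi_G D B ((theta_of L W)(Inl (k,l) := t))) e) has_real_derivative M1$a$b) (at t0)"
    by (rule has_field_derivative_transform_within_open[OF der openU t0U]) (simp add: feq)
  have "J_G D B L W e (Inl (k,l)) = M1$a$b"
    unfolding J_G_def partial_def using DERIV_imp_deriv[OF der2]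
    by (simp add: theta_of_def t0_def)
  also have "M1 = transpose X ** (transpose E ** S ** A + transpose A ** S ** E) ** X"
  proof -
    have XTAT: "transpose X ** transpose A = mat 1"
      using AX by (metis matrix_transpose_mul transpose_mat)
    have AX': "M ** A ** X = M" for M :: "real^'a^'a"
      by (metis AX matrix_mul_assoc matrix_mul_rid)
    show ?thesis
      unfolding M1_def P_def S_eq
      by (simp add: matrix_add_ldistrib mm_radd matrix_transpose_mul matrix_mul_assoc AX' XTAT)
  qed
  finally show ?thesis by (simp add: se a_def b_def)
qed


lemma JG_Inr:
  assumes rg: "reg_D D L" and pd: "PD_B B W" and e': "e' \<in> {{i} | i. True} \<union> B"
  defines "X \<equiv> matrix_inv (mat 1 - L)"
  shows "J_G D B L W e (Inr e') = sym_entry (transpose X ** mat_of (ind e') ** X) e"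
proof -
  define t0 where "t0 = sym_entry W e'"
  define a where "a = fst (pr e)"
  define b where "b = snd (pr e)"
  define F where "F = mat_of (ind e')"
  have feq: "sym_entry (phi_G D B ((theta_of L W)(Inr e' := t))) e
     = (transpose X ** W ** X) $ a $ b + (t - t0) * (transpose X ** F ** X) $ a $ b" for t
    unfolding phi_G_Inr[OF rg pd e'] t0_def[symmetric] unfolding se phi_def X_def[symmetric] F_def[symmetric]
    by (simp add: matrix_add_ldistrib mm_radd mm_lscale mm_rscale a_def b_def)
  have der: "((\<lambda>t. (transpose X ** W ** X) $ a $ b + (t - t0) * (transpose X ** F ** X) $ a $ b)
     has_real_derivative (transpose X ** F ** X) $ a $ b) (at t0)"
    by (rule derivative_eq_intros refl | simp)+
  have "J_G D B L W e (Inr e') = (transpose X ** F ** X) $ a $ b"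
  proof -
    have th: "theta_of L W (Inr e') = t0" by (simp add: theta_of_def t0_def)
    show ?thesis unfolding J_G_def partial_def feq th using DERIV_imp_deriv[OF der] by simp
  qed
  then show ?thesis by (simp add: se a_def b_def F_def)
qed

lemma bJ_eq:
  assumes rg: "reg_D D L" and kl: "(k,l) \<in> D"
  defines "A \<equiv> mat 1 - L"
  defines "E \<equiv> Eq (k,l)"
  shows "bJ D L S e (k,l) = - sym_entry (transpose E ** S ** A + transpose A ** S ** E) e"
proof -
  define t0 where "t0 = L$k$l"
  define a where "a = fst (pr e)"
  define b where "b = snd (pr e)"
  define M1 where "M1 = transpose E ** S ** A + transpose A ** S ** E"
  define M0 where "M0 = transpose A ** S ** A"
  define M2 where "M2 = transpose E ** S ** E"
  have lam: "Lam_of D ((\<lambda>(k,l). L$k$l)((k,l) := t)) = L + (t - t0) *\<^sub>R E" for t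
    using rg kl by (auto simp: Lam_of_def reg_D_def vec_eq_iff Eq_def E_def t0_def)
  have feq: "sym_entry (gmap (Lam_of D ((\<lambda>(k,l). L$k$l)((k,l) := t))) S) e
     = M0 $ a $ b - (t - t0) * M1 $ a $ b + ((t - t0) * (t - t0)) * M2 $ a $ b" for t
  proof -
    have g: "gmap (L + s *\<^sub>R E) S = M0 - s *\<^sub>R M1 + (s * s) *\<^sub>R M2" for s
    proof -
      have "mat 1 - (L + s *\<^sub>R E) = A - s *\<^sub>R E" by (simp add: A_def)
      then have "gmap (L + s *\<^sub>R E) S = transpose (A - s *\<^sub>R E) ** S ** (A - s *\<^sub>R E)"
        by (simp only: gmap_def)
      also have "\<dots> = M0 - s *\<^sub>R M1 + (s * s) *\<^sub>R M2"
        by (simp add: tr_diff transpose_scalar mm_rdiff mm_ldiff mm_lscale mm_rscale M0_def M1_def M2_def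
          algebra_simps)
      finally show ?thesis .
    qed
    show ?thesis
      unfolding lam se g by (simp add: a_def b_def)
  qed
  have der: "((\<lambda>t. M0 $ a $ b - (t - t0) * M1 $ a $ b + ((t - t0) * (t - t0)) * M2 $ a $ b)
     has_real_derivative - M1 $ a $ b) (at t0)"
    by (rule derivative_eq_intros refl | simp)+
  have "bJ D L S e (k,l) = - M1 $ a $ b"
    unfolding bJ_def partial_def feq using DERIV_imp_deriv[OF der]
    by (simp add: t0_def)
  then show ?thesis by (simp add: se a_def b_def M1_def)
qed



lemma mat_of_scale': "mat_of (\<lambda>x. a * f x) = a *\<^sub>R mat_of f"
  by (simp add: mat_of_def vec_eq_iff)

lemma T_lin: "Vector_Spaces.linear fsc fsc (\<lambda>f e. if e \<in> sigma_idx then sym_entry (Y ** mat_of f ** (Z::real^'v::finite^'v)) e else 0)"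
  by (rule linI) (auto simp: fun_eq_iff se mat_of_add mat_of_scale' matrix_add_ldistrib mm_radd mm_lscale mm_rscale fsc_def)

lemma neg_lin: "Vector_Spaces.linear fsc fsc (uminus :: ('a \<Rightarrow> real) \<Rightarrow> _)"
  by (rule linI) (auto simp: fun_eq_iff fsc_def)

lemma card_P:
  assumes mg: "mixed_graph D (B :: 'v::finite set set)"
  shows "card ({{i} | i. True} \<union> B) = CARD('v) + card B"
proof -
  have d: "{{i} | i. True} \<inter> B = {}"
    using mg by (fastforce simp: mixed_graph_def doubleton_eq_iff)
  have "{{i} | i::'v. True} = range (\<lambda>i. {i})" by auto
  then have "card {{i} | i::'v. True} = CARD('v)"
    by (simp add: card_image inj_on_def)
  then show ?thesis using d by (simp add: card_Un_disjoint)
qed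



theorem lemma1:
  fixes D :: "('v::finite \<times> 'v) set" and B :: "'v set set"
    and L W S :: "real^'v^'v"
  assumes "mixed_graph D B"
    and "reg_D D L"
    and "PD_B B W"
    and "S = phi L W"
  shows "mat_rank sigma_idx (params D B) (J_G D B L W)
           = mat_rank (N_idx B) D (bJ D L S) + card B + CARD('v)"
proof -
  note mg = assms(1) and rg = assms(2) and pd = assms(3) and Sdef = assms(4)
  define A where "A = mat 1 - L"
  define X where "X = matrix_inv A"
  define \<sigma> where "\<sigma> = (sigma_idx :: 'v set set)"
  define N where "N = N_idx B"
  define P where "P = {{i} | i::'v. True} \<union> B"
  define K where "K = (\<lambda>(k,l). transpose (Eq (k,l)) ** S ** A + transpose A ** S ** Eq (k,l))"
  define kf where "kf = (\<lambda>q e. if e \<in> \<sigma> then sym_entry (K q) e else 0)"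
  define c where "c = (\<lambda>p. case p of Inl q \<Rightarrow> kf q | Inr e' \<Rightarrow> ind e')"
  define T where "T = (\<lambda>f e. if e \<in> \<sigma> then sym_entry (transpose X ** mat_of f ** X) e else 0)"
  define T' where "T' = (\<lambda>f e. if e \<in> \<sigma> then sym_entry (transpose A ** mat_of f ** A) e else 0)"
  define \<pi> where "\<pi> = (\<lambda>(f::'v set \<Rightarrow> real) x. if x \<in> N then f x else 0)"
  have inv: "invertible A" using rg by (simp add: reg_D_def A_def)
  have AX: "A ** X = mat 1" and XA: "X ** A = mat 1" using minv[OF inv] by (simp_all add: X_def)
  have Ssym: "transpose S = S"
    unfolding Sdef phi_def using sym_congr[OF Wsym[OF pd]] by simp
  have Ksym: "transpose (K q) = K q" for q
  proof -
    obtain k l where q: "q = (k,l)" by force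
    show ?thesis unfolding K_def q
      by (simp add: tr_add matrix_transpose_mul Ssym matrix_mul_assoc add.commute)
  qed
  have mat_kf: "mat_of (kf q) = K q" for q
    unfolding kf_def \<sigma>_def by (rule mat_of_se[OF Ksym])
  have colJ: "(\<lambda>p r. if r \<in> sigma_idx then J_G D B L W r p else 0) ` params D B = T ` (c ` params D B)"
  proof -
    have "(\<lambda>r. if r \<in> sigma_idx then J_G D B L W r p else 0) = T (c p)" if p: "p \<in> params D B" for p
    proof (cases p)
      case (Inl q)
      obtain k l where q: "q = (k,l)" by force
      have kl: "(k,l) \<in> D" using p Inl q by (auto simp: params_def)
      show ?thesis
        using JG_Inl[OF rg pd kl] unfolding Inl q c_def T_def mat_kf
        by (simp add: mat_kf K_def Sdef A_def X_def \<sigma>_def fun_eq_iff)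
    next
      case (Inr e')
      have e': "e' \<in> {{i} | i. True} \<union> B" using p Inr by (auto simp: params_def)
      show ?thesis
        using JG_Inr[OF rg pd e'] unfolding Inr c_def T_def
        by (simp add: A_def X_def \<sigma>_def fun_eq_iff)
    qed
    then show ?thesis by (auto simp: image_image intro!: image_cong)
  qed
  have Bsig: "B \<subseteq> \<sigma>"
    using mg unfolding mixed_graph_def \<sigma>_def sigma_idx_def by blast
  have supp_c: "x \<in> c ` params D B \<Longrightarrow> e \<notin> \<sigma> \<Longrightarrow> x e = 0" for x e
    using Bsig by (auto simp: c_def kf_def params_def ind_def \<sigma>_def sigma_idx_def)
  have TT: "T' (T x) = x" if "x \<in> c ` params D B" for x
  proof
    fix e
    have m: "mat_of (T x) = transpose X ** mat_of x ** X"
      unfolding T_def \<sigma>_def by (rule mat_of_se[OF sym_congr[OF mat_of_sym]])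
    have "transpose A ** (transpose X ** mat_of x ** X) ** A = mat_of x"
    proof -
      have XTAT: "transpose A ** transpose X = mat 1"
        using XA by (metis matrix_transpose_mul transpose_mat)
      have XA': "M ** X ** A = M" for M :: "real^'v^'v"
        by (metis XA matrix_mul_assoc matrix_mul_rid)
      show ?thesis by (simp add: matrix_mul_assoc XTAT XA')
    qed
    then show "T' (T x) e = x e"
      using supp_c[OF that, of e] unfolding T'_def m
      by (auto simp: se_mat_of \<sigma>_def)
  qed
  have dimJ: "FV.dim (T ` (c ` params D B)) = FV.dim (c ` params D B)"
  proof (rule dim_inv_eq[where g=T'])
    show "Vector_Spaces.linear fsc fsc T" unfolding T_def \<sigma>_def by (rule T_lin)
    show "Vector_Spaces.linear fsc fsc T'" unfolding T'_def \<sigma>_def by (rule T_lin)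
  qed (rule TT)
  have cparams: "c ` params D B = ind ` P \<union> kf ` D"
    by (auto simp: params_def c_def P_def image_Un image_image)
  have sigPN: "\<sigma> \<subseteq> P \<union> N"
    by (auto simp: \<sigma>_def sigma_idx_def P_def N_def N_idx_def)
  have PN: "P \<inter> N = {}"
    using mg by (fastforce simp: P_def N_def N_idx_def mixed_graph_def doubleton_eq_iff)
  have ml: "FV.dim (ind ` P \<union> kf ` D) = card P + FV.dim (\<pi> ` kf ` D)"
    unfolding \<pi>_def
    by (rule main_lin[OF PN]) (use sigPN in \<open>auto simp: kf_def\<close>)
  have colB: "(\<lambda>q r. if r \<in> N_idx B then bJ D L S r q else 0) ` D = uminus ` (\<pi> ` kf ` D)"
  proof -
    have "(\<lambda>r. if r \<in> N_idx B then bJ D L S r q else 0) = - \<pi> (kf q)" if q: "q \<in> D" for q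
    proof -
      obtain k l where kl: "q = (k,l)" by force
      have "N \<subseteq> \<sigma>" by (auto simp: N_def N_idx_def \<sigma>_def sigma_idx_def)
      then show ?thesis
        using bJ_eq[OF rg q[unfolded kl], of S] unfolding kl
        by (auto simp: fun_eq_iff \<pi>_def kf_def K_def A_def N_def)
    qed
    then show ?thesis by (auto simp: image_image intro!: image_cong)
  qed
  have dimB: "FV.dim (uminus ` (\<pi> ` kf ` D)) = FV.dim (\<pi> ` kf ` D)"
    by (rule dim_inv_eq[OF neg_lin neg_lin]) simp
  show ?thesis
    unfolding mat_rank_def fsc_def[symmetric] colJ colB
    unfolding dimJ dimB
    unfolding cparams ml
    using card_P[OF mg] by (simp add: P_def)
qed

end
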